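(* Let $(\Omega,\mathcal F,\mathbb P)$ be a probability space, $V,U$ Banach spaces, and $X:[0,T]\times\Omega\to V$ a càdlàg stochastic process such that, for some $p\ge1$, $\|X(\omega)\|_{p\text{-var};[0,T]}<\infty$ for almost every $\omega$. Let $n:=\lfloor p\rfloor$ and $F\in\mathcal C^{n+1}_b(V,U)$. Then for almost every $\omega\in\Omega$, the RRS limit $\int_0^TDF(X_t)\,d\mathbb X_t:=\mathrm{RRS}\text{-}\lim_\Pi\sum_{[t_i,t_{i+1}]\in\Pi}\sum_{k=1}^n\frac1{k!}D^kF(X_{t_i})(X_{t_{i+1}}-X_{t_i})^{\otimes k}$ exists and $$F(X_T)-F(X_0)=\int_0^TDF(X_t)\,d\mathbb X_t+\sum_{0<t\le T}\Big(F(X_t)-F(X_{t-})-\sum_{k=1}^n\frac1{k!}D^kF(X_{t-})(\Delta^-_tX)^{\otimes k}\Big),$$ the series converging absolutely.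
   Context: Tensor powers carry norms with $\|a\otimes b\|=\|a\|\|b\|$ (e.g. $V$ finite-dimensional). $\|X\|_{p\text{-var};[0,T]}:=(\sup_\Pi\sum_{[t_i,t_{i+1}]\in\Pi}\|X_{t_{i+1}}-X_{t_i}\|^p)^{1/p}$ over partitions of $[0,T]$. $X_{t-}:=\lim_{u\uparrow t}X_u$, $\Delta^-_tX:=X_t-X_{t-}$. $\mathcal C^k_b(V,U)$: $k$ times continuously differentiable maps with all derivatives up to order $k$ bounded. RRS convergence: sums $S(\Pi)$ converge to $K$ if for every $\varepsilon>0$ there is a partition $\Pi_\varepsilon$ with $\|S(\Pi)-K\|<\varepsilon$ for every partition $\Pi\supset\Pi_\varepsilon$. *)

theory Defs
  imports "HOL-Probability.Probability"
begin

definition is_partition :: "real \<Rightarrow> real \<Rightarrow> real set \<Rightarrow> bool" where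
  "is_partition a b P \<longleftrightarrow> finite P \<and> P \<subseteq> {a..b} \<and> a \<in> P \<and> b \<in> P"

text \<open>Successor of a partition point t (for t not the right endpoint).\<close>
definition nxt :: "real set \<Rightarrow> real \<Rightarrow> real" where
  "nxt P t = Min {s \<in> P. s > t}"

definition psum :: "real \<Rightarrow> real set \<Rightarrow> (real \<Rightarrow> real \<Rightarrow> 'b::comm_monoid_add) \<Rightarrow> 'b" where
  "psum b P g = (\<Sum>t\<in>P - {b}. g t (nxt P t))"

definition finite_p_var :: "real \<Rightarrow> real \<Rightarrow> real \<Rightarrow> (real \<Rightarrow> 'v::real_normed_vector) \<Rightarrow> bool" where
  "finite_p_var p a b f \<longleftrightarrow>
     bdd_above {psum b P (\<lambda>s t. norm (f t - f s) powr p) | P. is_partition a b P}"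

definition cadlag_on :: "real \<Rightarrow> real \<Rightarrow> (real \<Rightarrow> 'v::topological_space) \<Rightarrow> bool" where
  "cadlag_on a b f \<longleftrightarrow> (\<forall>t\<in>{a..<b}. continuous (at_right t) f)
                       \<and> (\<forall>t\<in>{a<..b}. \<exists>l. (f \<longlongrightarrow> l) (at_left t))"

definition left_lim :: "(real \<Rightarrow> 'v::t2_space) \<Rightarrow> real \<Rightarrow> 'v" where
  "left_lim f t = Lim (at_left t) f"

definition rrs_converges :: "real \<Rightarrow> real \<Rightarrow> (real set \<Rightarrow> 'u::real_normed_vector) \<Rightarrow> 'u \<Rightarrow> bool" where
  "rrs_converges a b S K \<longleftrightarrow>
     (\<forall>e>0. \<exists>Pe. is_partition a b Pe \<and>
        (\<forall>P. is_partition a b P \<and> Pe \<subseteq> P \<longrightarrow> norm (S P - K) < e))"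

text \<open>Iterated Frechet derivative: iter_deriv F [h1,...,hk] x = D^k F(x)(h1,...,hk).\<close>
fun iter_deriv :: "('v::real_normed_vector \<Rightarrow> 'u::real_normed_vector) \<Rightarrow> 'v list \<Rightarrow> 'v \<Rightarrow> 'u" where
  "iter_deriv F [] = F"
| "iter_deriv F (h # hs) = (\<lambda>x. frechet_derivative (iter_deriv F hs) (at x) h)"

text \<open>C^m_b: m times continuously (Frechet) differentiable, with F and all derivatives
  up to order m bounded (as multilinear maps, operator norm), D^k F continuous in operator norm.\<close>
definition Cb :: "nat \<Rightarrow> ('v::real_normed_vector \<Rightarrow> 'u::real_normed_vector) \<Rightarrow> bool" where
  "Cb m F \<longleftrightarrow>
     (\<forall>hs x. length hs < m \<longrightarrow> iter_deriv F hs differentiable (at x)) \<and>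
     (\<exists>C. \<forall>hs x. length hs \<le> m \<longrightarrow> norm (iter_deriv F hs x) \<le> C * prod_list (map norm hs)) \<and>
     (\<forall>x. \<forall>e>0. \<exists>d>0. \<forall>y hs. length hs \<le> m \<and> dist y x < d \<longrightarrow>
          norm (iter_deriv F hs y - iter_deriv F hs x) \<le> e * prod_list (map norm hs))"

definition taylor_incr :: "nat \<Rightarrow> ('v::real_normed_vector \<Rightarrow> 'u::real_normed_vector) \<Rightarrow> 'v \<Rightarrow> 'v \<Rightarrow> 'u" where
  "taylor_incr n F x h = (\<Sum>k=1..n. (1 / fact k) *\<^sub>R iter_deriv F (replicate k h) x)"

end

theory Submission
  imports Defs
begin

lemma iter_slot_diff:
  assumes D: "\<forall>hs x. length hs < m \<longrightarrow> iter_deriv F hs differentiable (at x)"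
  shows "length hs \<le> m \<Longrightarrow> i < length hs \<Longrightarrow>
    iter_deriv F (hs[i := a - b]) = (\<lambda>x. iter_deriv F (hs[i:=a]) x - iter_deriv F (hs[i:=b]) x)"
proof (induction hs arbitrary: i)
  case Nil
  then show ?case by simp
next
  case (Cons h hs)
  show ?case
  proof (cases i)
    case 0
    have "\<And>x. linear (frechet_derivative (iter_deriv F hs) (at x))"
      using D Cons.prems by (auto intro!: linear_frechet_derivative)
    then show ?thesis using 0 by (auto simp: linear_diff)
  next
    case (Suc j)
    have j: "j < length hs" using Cons.prems Suc by auto
    have IH: "iter_deriv F (hs[j := a - b]) = (\<lambda>x. iter_deriv F (hs[j:=a]) x - iter_deriv F (hs[j:=b]) x)"
      using Cons.IH Cons.prems j by auto
    have d1: "\<And>x. iter_deriv F (hs[j:=a]) differentiable (at x)"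
      and d2: "\<And>x. iter_deriv F (hs[j:=b]) differentiable (at x)"
      using D Cons.prems by auto
    have "frechet_derivative (\<lambda>x. iter_deriv F (hs[j:=a]) x - iter_deriv F (hs[j:=b]) x) (at x)
        = (\<lambda>v. frechet_derivative (iter_deriv F (hs[j:=a])) (at x) v - frechet_derivative (iter_deriv F (hs[j:=b])) (at x) v)" for x
      by (rule frechet_derivative_at[symmetric], rule has_derivative_diff)
         (use d1 d2 frechet_derivative_works in auto)
    then show ?thesis using Suc IH by auto
  qed
qed

lemma iter_poly_lip:
  assumes D: "\<forall>hs x. length hs < m \<longrightarrow> iter_deriv F hs differentiable (at x)"
    and C: "\<forall>hs x. length hs \<le> m \<longrightarrow> norm (iter_deriv F hs x) \<le> C * prod_list (map norm hs)"
    and k: "k \<le> m" and M: "norm h \<le> M" "norm h0 \<le> M"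
  shows "norm (iter_deriv F (replicate k h) x - iter_deriv F (replicate k h0) x)
     \<le> real k * (C * M ^ (k - 1) * norm (h - h0))"
proof -
  define L where "L j = replicate j h @ replicate (k - j) h0" for j
  have C0: "C \<ge> 0" using C[rule_format, of "[]" x] by (auto intro: order_trans[OF norm_ge_zero])
  have M0: "M \<ge> 0" using M norm_ge_zero order_trans by blast
  have step: "norm (iter_deriv F (L (Suc j)) x - iter_deriv F (L j) x) \<le> C * M ^ (k - 1) * norm (h - h0)"
    if j: "j < k" for j
  proof -
    define G where "G = replicate j h @ h0 # replicate (k - Suc j) h0"
    have kj: "k - j = Suc (k - Suc j)" using j by arith
    have Lj: "L j = G" unfolding L_def G_def using kj by simp
    have LSj: "L (Suc j) = G[j := h]"
    proof -
      have "replicate (Suc j) h = replicate j h @ [h]" by (simp add: replicate_append_same)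
      then show ?thesis unfolding L_def G_def by (simp add: list_update_append del: replicate_Suc)
    qed
    have G0: "G[j := h0] = G" unfolding G_def by (simp add: list_update_append)
    have lenG: "length G = k" unfolding G_def using j by simp
    have "iter_deriv F (G[j := h - h0]) x = iter_deriv F (G[j:=h]) x - iter_deriv F (G[j:=h0]) x"
      using iter_slot_diff[OF D, of G j h h0] lenG k j by auto
    hence eq: "iter_deriv F (L (Suc j)) x - iter_deriv F (L j) x = iter_deriv F (G[j := h - h0]) x"
      using Lj LSj G0 by simp
    have pl: "prod_list (map norm (G[j := h - h0])) = norm h ^ j * (norm (h - h0) * norm h0 ^ (k - Suc j))"
      unfolding G_def by (simp add: list_update_append prod_list_replicate)
    have "norm h ^ j * (norm (h - h0) * norm h0 ^ (k - Suc j)) \<le> M ^ j * (norm (h - h0) * M ^ (k - Suc j))"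
      using M0 by (intro mult_mono power_mono M mult_nonneg_nonneg) auto
    also have "\<dots> = M ^ (k - 1) * norm (h - h0)" using j
      by (simp add: power_add[symmetric])
    finally have "prod_list (map norm (G[j := h - h0])) \<le> M ^ (k - 1) * norm (h - h0)" using pl by simp
    hence "C * prod_list (map norm (G[j := h - h0])) \<le> C * (M ^ (k - 1) * norm (h - h0))"
      using C0 by (rule mult_left_mono)
    moreover have "norm (iter_deriv F (G[j := h - h0]) x) \<le> C * prod_list (map norm (G[j := h - h0]))"
      using C lenG k by auto
    ultimately show ?thesis using eq by (simp add: mult.assoc)
  qed
  have "iter_deriv F (replicate k h) x - iter_deriv F (replicate k h0) x
      = (\<Sum>j<k. iter_deriv F (L (Suc j)) x - iter_deriv F (L j) x)"
    by (subst sum_lessThan_telescope) (simp add: L_def)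
  also have "norm \<dots> \<le> (\<Sum>j<k. C * M ^ (k - 1) * norm (h - h0))"
    by (rule sum_norm_le) (use step in auto) 
  finally show ?thesis by simp
qed

lemma iter_line_vd:
  assumes d: "iter_deriv F hs differentiable (at (x + t *\<^sub>R h))"
  shows "((\<lambda>t. iter_deriv F hs (x + t *\<^sub>R h)) has_vector_derivative iter_deriv F (h # hs) (x + t *\<^sub>R h)) (at t within S)"
proof -
  let ?D = "frechet_derivative (iter_deriv F hs) (at (x + t *\<^sub>R h))"
  have l: "((\<lambda>t. x + t *\<^sub>R h) has_derivative (\<lambda>s. s *\<^sub>R h)) (at t within S)"
    by (auto intro!: derivative_eq_intros)
  have g: "(iter_deriv F hs has_derivative ?D) (at (x + t *\<^sub>R h))"
    using d frechet_derivative_works by blast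
  have c: "((\<lambda>t. iter_deriv F hs (x + t *\<^sub>R h)) has_derivative (\<lambda>s. ?D (s *\<^sub>R h))) (at t within S)"
    by (rule has_derivative_compose[OF l g])
  have lin: "linear ?D" using d by (rule linear_frechet_derivative)
  have "(\<lambda>s. ?D (s *\<^sub>R h)) = (\<lambda>s. s *\<^sub>R ?D h)" using linear_scale[OF lin] by auto
  with c show ?thesis by (simp add: has_vector_derivative_def)
qed

lemma taylor_rem_bound:
  fixes F :: "'v::real_normed_vector \<Rightarrow> 'u::banach"
  assumes D: "\<forall>hs x. length hs < Suc n \<longrightarrow> iter_deriv F hs differentiable (at x)"
    and C: "\<forall>hs x. length hs \<le> Suc n \<longrightarrow> norm (iter_deriv F hs x) \<le> C * prod_list (map norm hs)"
  shows "norm (F y - F x - taylor_incr n F x (y - x)) \<le> (C / fact n) * norm (y - x) ^ Suc n"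
proof -
  define h where "h = y - x"
  define Df where "Df i t = iter_deriv F (replicate i h) (x + t *\<^sub>R h)" for i t
  have C0: "C \<ge> 0" using C[rule_format, of "[]" x] by (auto intro: order_trans[OF norm_ge_zero])
  have vd: "(Df m has_vector_derivative Df (Suc m) t) (at t within {0..1})" if "m < Suc n" for m t
    unfolding Df_def using iter_line_vd[of F "replicate m h" x t h] D that by auto
  have TI: "((\<lambda>t. ((1 - t) ^ (Suc n - 1) / fact (Suc n - 1)) *\<^sub>R Df (Suc n) t) has_integral
      Df 0 1 - (\<Sum>i<Suc n. ((1 - 0) ^ i / fact i) *\<^sub>R Df i 0)) {0..1}"
    by (rule Taylor_has_integral[of "Suc n" Df "Df 0" 0 1]) (use vd in auto)
  have e1: "Df 0 1 = F y" unfolding Df_def h_def by simp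
  have "(\<Sum>i<Suc n. ((1 - 0) ^ i / fact i) *\<^sub>R Df i 0) = (\<Sum>i\<in>insert 0 {1..n}. (1 / fact i) *\<^sub>R Df i 0)"
    by (rule sum.cong) auto
  also have "\<dots> = F x + taylor_incr n F x h"
    by (subst sum.insert) (auto simp: Df_def taylor_incr_def)
  finally have e2: "(\<Sum>i<Suc n. ((1 - 0) ^ i / fact i) *\<^sub>R Df i 0) = F x + taylor_incr n F x h" .
  have TI': "((\<lambda>t. ((1 - t) ^ n / fact n) *\<^sub>R Df (Suc n) t) has_integral
      (F y - F x - taylor_incr n F x h)) (cbox 0 1)"
    using TI e1 e2 by (simp add: algebra_simps)
  have bnd: "norm (((1 - t) ^ n / fact n) *\<^sub>R Df (Suc n) t) \<le> (C / fact n) * norm h ^ Suc n"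
    if t: "t \<in> cbox 0 1" for t
  proof -
    have a: "\<bar>(1 - t) ^ n / fact n\<bar> \<le> 1 / fact n"
      using t by (auto simp: abs_mult power_abs intro!: divide_right_mono power_le_one)
    have b: "norm (Df (Suc n) t) \<le> C * norm h ^ Suc n"
      using C[rule_format, of "replicate (Suc n) h" "x + t *\<^sub>R h"]
      by (simp add: Df_def prod_list_replicate del: replicate_Suc)
    have "norm (((1 - t) ^ n / fact n) *\<^sub>R Df (Suc n) t) = \<bar>(1 - t) ^ n / fact n\<bar> * norm (Df (Suc n) t)"
      by simp
    also have "\<dots> \<le> (1 / fact n) * (C * norm h ^ Suc n)"
      by (rule mult_mono[OF a b]) auto
    finally show ?thesis by simp
  qed
  have "norm (F y - F x - taylor_incr n F x h) \<le> (C / fact n) * norm h ^ Suc n * Henstock_Kurzweil_Integration.content (cbox (0::real) 1)"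
    by (rule has_integral_bound[OF _ TI' bnd]) (use C0 in auto)
  then show ?thesis by (simp add: h_def)
qed

lemma iter_cont_poly:
  assumes D: "\<forall>hs x. length hs < m \<longrightarrow> iter_deriv F hs differentiable (at x)"
    and C: "\<forall>hs x. length hs \<le> m \<longrightarrow> norm (iter_deriv F hs x) \<le> C * prod_list (map norm hs)"
    and U: "\<forall>x. \<forall>e>0. \<exists>d>0. \<forall>y hs. length hs \<le> m \<and> dist y x < d \<longrightarrow>
          norm (iter_deriv F hs y - iter_deriv F hs x) \<le> e * prod_list (map norm hs)"
    and k: "k \<le> m"
  shows "isCont (\<lambda>b. iter_deriv F (replicate k (y - b)) b) a"
  unfolding continuous_at_eps_delta
proof (intro allI impI)
  fix e :: real assume e: "e > 0"
  define h0 where "h0 = y - a"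
  define M where "M = norm h0 + 1"
  have M1: "M \<ge> 1" unfolding M_def by simp
  have C0: "C \<ge> 0" using C[rule_format, of "[]" a] by (auto intro: order_trans[OF norm_ge_zero])
  define e1 where "e1 = e / (2 * (M ^ k + 1))"
  have e1: "e1 > 0" unfolding e1_def using e M1 by (auto intro!: divide_pos_pos add_pos_nonneg)
  obtain d1 where d1: "d1 > 0" and
    hd1: "\<And>b hs. length hs \<le> m \<Longrightarrow> dist b a < d1 \<Longrightarrow> norm (iter_deriv F hs b - iter_deriv F hs a) \<le> e1 * prod_list (map norm hs)"
    using U e1 by meson
  define K where "K = real k * C * M ^ (k - 1) + 1"
  have K: "K > 0" unfolding K_def using C0 M1 by (auto intro!: add_nonneg_pos)
  define d where "d = min d1 (min 1 (e / (2 * K)))"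
  have d: "d > 0" unfolding d_def using d1 e K by auto
  show "\<exists>d>0. \<forall>b. dist b a < d \<longrightarrow> dist (iter_deriv F (replicate k (y - b)) b) (iter_deriv F (replicate k (y - a)) a) < e"
  proof (intro exI[of _ d] conjI allI impI d)
    fix b assume b: "dist b a < d"
    define h where "h = y - b"
    have hh0: "norm (h - h0) = dist b a" unfolding h_def h0_def by (simp add: dist_norm norm_minus_commute)
    have hM: "norm h \<le> M" using b hh0 norm_triangle_ineq2[of h h0] unfolding M_def d_def by auto
    have h0M: "norm h0 \<le> M" unfolding M_def by simp
    have t1: "norm (iter_deriv F (replicate k h) b - iter_deriv F (replicate k h) a) \<le> e1 * M ^ k"
    proof -
      have "norm (iter_deriv F (replicate k h) b - iter_deriv F (replicate k h) a) \<le> e1 * norm h ^ k"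
        using hd1[of "replicate k h" b] k b unfolding d_def by (auto simp: prod_list_replicate)
      also have "\<dots> \<le> e1 * M ^ k" using e1 hM by (auto intro!: mult_left_mono power_mono)
      finally show ?thesis .
    qed
    have "e1 * M ^ k = (e / 2) * (M ^ k / (M ^ k + 1))" unfolding e1_def by (simp add: field_simps)
    also have "\<dots> \<le> (e / 2) * 1"
    proof (rule mult_left_mono)
      have "M ^ k \<ge> 0" using M1 by simp
      then show "M ^ k / (M ^ k + 1) \<le> 1" by (simp add: divide_le_eq_1)
    qed (use e in auto)
    finally have "e1 * M ^ k \<le> e / 2" by simp
    have t2: "norm (iter_deriv F (replicate k h) a - iter_deriv F (replicate k h0) a) \<le> real k * (C * M ^ (k - 1) * norm (h - h0))"
      by (rule iter_poly_lip[OF D C k hM h0M])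
    have "real k * (C * M ^ (k - 1) * norm (h - h0)) \<le> K * norm (h - h0)"
      unfolding K_def by (auto simp: algebra_simps)
    also have "\<dots> < K * (e / (2 * K))"
      using hh0 b K unfolding d_def by (intro mult_strict_left_mono) auto
    also have "\<dots> = e / 2" using K by auto
    finally have "real k * (C * M ^ (k - 1) * norm (h - h0)) < e / 2" .
    show "dist (iter_deriv F (replicate k (y - b)) b) (iter_deriv F (replicate k (y - a)) a) < e"
      unfolding dist_norm h_def[symmetric] h0_def[symmetric]
      using t1 t2 \<open>e1 * M ^ k \<le> e / 2\<close> \<open>real k * (C * M ^ (k - 1) * norm (h - h0)) < e / 2\<close>
        norm_triangle_ineq[of "iter_deriv F (replicate k h) b - iter_deriv F (replicate k h) a" "iter_deriv F (replicate k h) a - iter_deriv F (replicate k h0) a"]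
      by simp
  qed
qed

definition remT :: "nat \<Rightarrow> ('v::real_normed_vector \<Rightarrow> 'u::real_normed_vector) \<Rightarrow> 'v \<Rightarrow> 'v \<Rightarrow> 'u" where
  "remT n F x y = F y - F x - taylor_incr n F x (y - x)"

lemma Cb_props:
  fixes F :: "'v::real_normed_vector \<Rightarrow> 'u::banach"
  assumes "Cb (Suc n) F"
  shows "\<exists>CR\<ge>0. \<forall>x y. norm (remT n F x y) \<le> CR * norm (y - x) ^ Suc n"
    and "\<And>y a. isCont (\<lambda>b. remT n F b y) a"
    and "\<And>x. taylor_incr n F x 0 = 0"
proof -
  obtain C where D: "\<forall>hs x. length hs < Suc n \<longrightarrow> iter_deriv F hs differentiable (at x)"
    and C: "\<forall>hs x. length hs \<le> Suc n \<longrightarrow> norm (iter_deriv F hs x) \<le> C * prod_list (map norm hs)"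
    and U: "\<forall>x. \<forall>e>0. \<exists>d>0. \<forall>y hs. length hs \<le> Suc n \<and> dist y x < d \<longrightarrow>
          norm (iter_deriv F hs y - iter_deriv F hs x) \<le> e * prod_list (map norm hs)"
    using assms unfolding Cb_def by blast
  have C0: "C \<ge> 0" using C[rule_format, of "[]" 0] by (auto intro: order_trans[OF norm_ge_zero])
  show "\<exists>CR\<ge>0. \<forall>x y. norm (remT n F x y) \<le> CR * norm (y - x) ^ Suc n"
    using taylor_rem_bound[OF D C] C0 unfolding remT_def by (intro exI[of _ "C / fact n"]) auto
  show "isCont (\<lambda>b. remT n F b y) a" for y a
  proof -
    have cF: "isCont F a" using D[rule_format, of "[]" a]
      by (simp add: differentiable_imp_continuous_within)
    have ck: "isCont (\<lambda>b. iter_deriv F (replicate k (y - b)) b) a" if "k \<in> {1..n}" for k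
      by (rule iter_cont_poly[OF D C U]) (use that in auto)
    show ?thesis unfolding remT_def taylor_incr_def
      using cF ck by (intro continuous_intros) auto
  qed
  show "taylor_incr n F x 0 = 0" for x
  proof -
    have "iter_deriv F (replicate k 0) x = 0" if kin: "k \<in> {1..n}" for k
    proof -
      obtain j where k: "k = Suc j" using kin by (cases k) auto
      have "linear (frechet_derivative (iter_deriv F (replicate j 0)) (at x))"
        using D k kin by (auto intro!: linear_frechet_derivative)
      then show ?thesis using k by (simp add: linear_0)
    qed
    then show ?thesis unfolding taylor_incr_def by simp
  qed
qed

definition prv :: "real set \<Rightarrow> real \<Rightarrow> real" where
  "prv P u = Max {s \<in> P. s < u}"

lemma nxt_props:
  assumes P: "is_partition a b P" and t: "t \<in> P" "t \<noteq> b"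
  shows "nxt P t \<in> P" "t < nxt P t" "\<And>s. s \<in> P \<Longrightarrow> t < s \<Longrightarrow> nxt P t \<le> s"
proof -
  have fin: "finite {s \<in> P. s > t}" using P unfolding is_partition_def by auto
  have ne: "b \<in> {s \<in> P. s > t}" using P t unfolding is_partition_def by auto
  show "nxt P t \<in> P" "t < nxt P t" using Min_in[OF fin] ne unfolding nxt_def by auto
  show "\<And>s. s \<in> P \<Longrightarrow> t < s \<Longrightarrow> nxt P t \<le> s" using Min_le[OF fin] unfolding nxt_def by auto
qed

lemma prv_props:
  assumes P: "is_partition a b P" and u: "u \<in> P" "u \<noteq> a"
  shows "prv P u \<in> P" "prv P u < u" "\<And>s. s \<in> P \<Longrightarrow> s < u \<Longrightarrow> s \<le> prv P u"
proof -
  have fin: "finite {s \<in> P. s < u}" using P unfolding is_partition_def by auto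
  have ne: "a \<in> {s \<in> P. s < u}" using P u unfolding is_partition_def by auto
  show "prv P u \<in> P" "prv P u < u" using Max_in[OF fin] ne unfolding prv_def by auto
  show "\<And>s. s \<in> P \<Longrightarrow> s < u \<Longrightarrow> s \<le> prv P u" using Max_ge[OF fin] unfolding prv_def by auto
qed

lemma prv_nxt:
  assumes P: "is_partition a b P" and t: "t \<in> P" "t \<noteq> b"
  shows "prv P (nxt P t) = t"
proof -
  note n = nxt_props[OF P t]
  have "nxt P t \<noteq> a" using n(2) t P unfolding is_partition_def by auto
  note pr = prv_props[OF P n(1) this]
  have "t \<le> prv P (nxt P t)" using pr(3)[OF t(1) n(2)] .
  moreover have "prv P (nxt P t) \<le> t"
  proof (rule ccontr)
    assume "\<not> ?thesis"
    then have "nxt P t \<le> prv P (nxt P t)" using n(3)[OF pr(1)] by auto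
    with pr(2) show False by auto
  qed
  ultimately show ?thesis by auto
qed

lemma nxt_prv:
  assumes P: "is_partition a b P" and u: "u \<in> P" "u \<noteq> a"
  shows "nxt P (prv P u) = u"
proof -
  note pr = prv_props[OF P u]
  have "prv P u \<noteq> b" using pr(2) u P unfolding is_partition_def by auto
  note n = nxt_props[OF P pr(1) this]
  have "nxt P (prv P u) \<le> u" using n(3)[OF u(1) pr(2)] .
  moreover have "u \<le> nxt P (prv P u)"
  proof (rule ccontr)
    assume "\<not> ?thesis"
    then have "nxt P (prv P u) \<le> prv P u" using pr(3)[OF n(1)] by auto
    with n(2) show False by auto
  qed
  ultimately show ?thesis by auto
qed

lemma psum_prv:
  assumes P: "is_partition a b P" and ab: "a < b"
  shows "psum b P g = (\<Sum>u\<in>P - {a}. g (prv P u) u)"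
proof -
  have bij: "bij_betw (nxt P) (P - {b}) (P - {a})"
  proof (rule bij_betw_byWitness[where f' = "prv P"])
    show "\<forall>t\<in>P - {b}. prv P (nxt P t) = t" using prv_nxt[OF P] by auto
    show "\<forall>u\<in>P - {a}. nxt P (prv P u) = u" using nxt_prv[OF P] by auto
    show "nxt P ` (P - {b}) \<subseteq> P - {a}"
    proof
      fix u assume "u \<in> nxt P ` (P - {b})"
      then obtain t where t: "t \<in> P" "t \<noteq> b" "u = nxt P t" by auto
      note n = nxt_props[OF P t(1,2)]
      have "t \<ge> a" using P t unfolding is_partition_def by auto
      then show "u \<in> P - {a}" using n t by auto
    qed
    show "prv P ` (P - {a}) \<subseteq> P - {b}"
    proof
      fix t assume "t \<in> prv P ` (P - {a})"
      then obtain u where u: "u \<in> P" "u \<noteq> a" "t = prv P u" by auto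
      note n = prv_props[OF P u(1,2)]
      have "u \<le> b" using P u unfolding is_partition_def by auto
      then show "t \<in> P - {b}" using n u by auto
    qed
  qed
  have "(\<Sum>u\<in>P - {a}. g (prv P u) u) = (\<Sum>t\<in>P - {b}. g (prv P (nxt P t)) (nxt P t))"
    using sum.reindex_bij_betw[OF bij, of "\<lambda>u. g (prv P u) u"] by simp
  also have "\<dots> = psum b P g" unfolding psum_def
    by (rule sum.cong) (use prv_nxt[OF P] in auto)
  finally show ?thesis by simp
qed

lemma psum_telescope:
  fixes h :: "real \<Rightarrow> 'b::ab_group_add"
  assumes P: "is_partition a b P" and ab: "a < b"
  shows "psum b P (\<lambda>s t. h t - h s) = h b - h a"
proof -
  have fin: "finite P" and aP: "a \<in> P" and bP: "b \<in> P" using P unfolding is_partition_def by auto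
  have "psum b P (\<lambda>s t. h t - h s) = (\<Sum>t\<in>P - {b}. h (nxt P t)) - (\<Sum>t\<in>P - {b}. h t)"
    unfolding psum_def by (simp add: sum_subtractf)
  also have "(\<Sum>t\<in>P - {b}. h (nxt P t)) = (\<Sum>u\<in>P - {a}. h u)"
    using psum_prv[OF P ab, of "\<lambda>s t. h t"] unfolding psum_def by simp
  also have "(\<Sum>u\<in>P - {a}. h u) = (\<Sum>u\<in>P. h u) - h a" by (simp add: sum.remove[OF fin aP])
  also have "(\<Sum>u\<in>P - {b}. h u) = (\<Sum>u\<in>P. h u) - h b" by (simp add: sum.remove[OF fin bP])
  finally show ?thesis by simp
qed

locale cpath =
  fixes f :: "real \<Rightarrow> 'v::real_normed_vector" and T p V :: real
  assumes T: "T > 0" and p: "p \<ge> 1" and cad: "cadlag_on 0 T f"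
    and Vb: "\<And>P. is_partition 0 T P \<Longrightarrow> psum T P (\<lambda>s t. norm (f t - f s) powr p) \<le> V"
begin

lemma ll: assumes "t \<in> {0<..T}" shows "(f \<longlongrightarrow> left_lim f t) (at_left t)"
proof -
  obtain l where l: "(f \<longlongrightarrow> l) (at_left t)" using cad assms unfolding cadlag_on_def by blast
  have "left_lim f t = l" unfolding left_lim_def by (rule tendsto_Lim) (use l in auto)
  with l show ?thesis by simp
qed

lemma lim_bound:
  fixes g :: "real \<Rightarrow> 'w::real_normed_vector"
  assumes l: "(g \<longlongrightarrow> l) (at_left u)" and su: "s < u"
    and b: "\<And>r. s \<le> r \<Longrightarrow> r < u \<Longrightarrow> norm (g r - c) \<le> e"
  shows "norm (l - c) \<le> e"
proof (rule tendsto_upperbound)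
  show "((\<lambda>r. norm (g r - c)) \<longlongrightarrow> norm (l - c)) (at_left u)" using l by (intro tendsto_intros)
  show "\<forall>\<^sub>F r in at_left u. norm (g r - c) \<le> e"
    unfolding eventually_at_left_field using su b by (intro exI[of _ s]) auto
qed auto

lemma V0: "V \<ge> 0"
proof -
  have P: "is_partition 0 T {0, T}" using T unfolding is_partition_def by auto
  have "0 \<le> psum T {0, T} (\<lambda>s t. norm (f t - f s) powr p)" unfolding psum_def by (auto intro: sum_nonneg)
  also have "\<dots> \<le> V" by (rule Vb[OF P])
  finally show ?thesis .
qed

definition good :: "real \<Rightarrow> real \<Rightarrow> bool" where
  "good e c \<longleftrightarrow> (\<exists>B. finite B \<and> B \<subseteq> {0..c} \<and> 0 \<in> B \<and> c \<in> B \<and>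
     (\<forall>s r. 0 \<le> s \<and> s \<le> r \<and> r \<le> c \<and> (\<forall>b\<in>B. \<not> (s < b \<and> b \<le> r)) \<longrightarrow> norm (f r - f s) < e))"

lemma billingsley:
  assumes e: "e > 0"
  shows "\<exists>B. is_partition 0 T B \<and>
     (\<forall>s r. 0 \<le> s \<and> s \<le> r \<and> r \<le> T \<and> (\<forall>b\<in>B. \<not> (s < b \<and> b \<le> r)) \<longrightarrow> norm (f r - f s) < e)"
proof -
  define S where "S = {c \<in> {0..T}. good e c}"
  have g0: "good e 0" unfolding good_def
  proof (intro exI[of _ "{0}"] conjI allI impI)
    fix s r :: real assume "0 \<le> s \<and> s \<le> r \<and> r \<le> 0 \<and> (\<forall>b\<in>{0}. \<not> (s < b \<and> b \<le> r))"
    then have "s = r" by auto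
    then show "norm (f r - f s) < e" using e by simp
  qed auto
  have S0: "0 \<in> S" unfolding S_def using g0 T by auto
  have Sne: "S \<noteq> {}" using S0 by auto
  have Sbdd: "bdd_above S" unfolding S_def by (rule bdd_aboveI[of _ T]) auto
  define \<tau> where "\<tau> = Sup S"
  have tau0: "0 \<le> \<tau>" unfolding \<tau>_def using cSup_upper[OF S0 Sbdd] .
  have tauT: "\<tau> \<le> T" unfolding \<tau>_def by (rule cSup_least[OF Sne]) (auto simp: S_def)
  have gtau: "good e \<tau>"
  proof (cases "\<tau> = 0")
    case True then show ?thesis using g0 by simp
  next
    case False
    then have tpos: "\<tau> > 0" using tau0 by auto
    have "\<forall>\<^sub>F r in at_left \<tau>. dist (f r) (left_lim f \<tau>) < e / 2"
      using tendstoD[OF ll[of \<tau>], of "e/2"] tpos tauT e by auto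
    then obtain b where b: "b < \<tau>" and hb: "\<And>r. b < r \<Longrightarrow> r < \<tau> \<Longrightarrow> norm (f r - left_lim f \<tau>) < e / 2"
      unfolding eventually_at_left_field dist_norm by auto
    have "max b 0 < \<tau>" using b tpos by auto
    then obtain c where cS: "c \<in> S" and bc: "max b 0 < c" unfolding \<tau>_def using less_cSup_iff[OF Sne Sbdd] by auto
    have ct: "c \<le> \<tau>" unfolding \<tau>_def using cSup_upper[OF cS Sbdd] .
    show ?thesis
    proof (cases "c = \<tau>")
      case True then show ?thesis using cS S_def by auto
    next
      case False
      then have ct': "c < \<tau>" using ct by auto
      obtain B where B: "finite B" "B \<subseteq> {0..c}" "0 \<in> B" "c \<in> B"
        and hB: "\<And>s r. 0 \<le> s \<Longrightarrow> s \<le> r \<Longrightarrow> r \<le> c \<Longrightarrow> (\<forall>b\<in>B. \<not> (s < b \<and> b \<le> r)) \<Longrightarrow> norm (f r - f s) < e"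
        using cS unfolding S_def good_def by blast
      show ?thesis unfolding good_def
      proof (intro exI[of _ "insert \<tau> B"] conjI allI impI)
        show "finite (insert \<tau> B)" using B by auto
        show "insert \<tau> B \<subseteq> {0..\<tau>}" using B ct tau0 by auto
        show "0 \<in> insert \<tau> B" "\<tau> \<in> insert \<tau> B" using B by auto
        fix s r assume a: "0 \<le> s \<and> s \<le> r \<and> r \<le> \<tau> \<and> (\<forall>b\<in>insert \<tau> B. \<not> (s < b \<and> b \<le> r))"
        show "norm (f r - f s) < e"
        proof (cases "r \<le> c")
          case True then show ?thesis using hB[of s r] a by auto
        next
          case False
          then have sc: "c \<le> s" using a B(4) by force
          show ?thesis
          proof (cases "r = \<tau>")
            case True then have "s = r" using a by force
            then show ?thesis using e by simp
          next
            case False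
            then have "r < \<tau>" using a by auto
            then have "norm (f r - left_lim f \<tau>) < e / 2" "norm (f s - left_lim f \<tau>) < e / 2"
              using hb[of r] hb[of s] a sc bc by auto
            then show ?thesis using norm_triangle_ineq4[of "f r - left_lim f \<tau>" "f s - left_lim f \<tau>"]
              by simp
          qed
        qed
      qed
    qed
  qed
  have tT: "\<tau> = T"
  proof (rule ccontr)
    assume "\<tau> \<noteq> T"
    then have tT': "\<tau> < T" using tauT by auto
    have "continuous (at_right \<tau>) f" using cad tT' tau0 unfolding cadlag_on_def by auto
    then have "(f \<longlongrightarrow> f \<tau>) (at_right \<tau>)" by (simp add: continuous_within)
    then have "\<forall>\<^sub>F r in at_right \<tau>. dist (f r) (f \<tau>) < e / 2"
      using e by (intro tendstoD) auto
    then obtain b where b: "b > \<tau>" and hb: "\<And>r. \<tau> < r \<Longrightarrow> r < b \<Longrightarrow> norm (f r - f \<tau>) < e / 2"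
      unfolding eventually_at_right_field dist_norm by auto
    define c where "c = min ((\<tau> + b) / 2) T"
    have c: "\<tau> < c" "c \<le> T" "c < b" using b tT' unfolding c_def by (auto simp: min_def)
    obtain B where B: "finite B" "B \<subseteq> {0..\<tau>}" "0 \<in> B" "\<tau> \<in> B"
      and hB: "\<And>s r. 0 \<le> s \<Longrightarrow> s \<le> r \<Longrightarrow> r \<le> \<tau> \<Longrightarrow> (\<forall>b\<in>B. \<not> (s < b \<and> b \<le> r)) \<Longrightarrow> norm (f r - f s) < e"
      using gtau unfolding good_def by blast
    have "good e c" unfolding good_def
    proof (intro exI[of _ "insert c B"] conjI allI impI)
      show "finite (insert c B)" using B by auto
      show "insert c B \<subseteq> {0..c}" using B c tau0 by auto
      show "0 \<in> insert c B" "c \<in> insert c B" using B by auto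
      fix s r assume a: "0 \<le> s \<and> s \<le> r \<and> r \<le> c \<and> (\<forall>b\<in>insert c B. \<not> (s < b \<and> b \<le> r))"
      show "norm (f r - f s) < e"
      proof (cases "r \<le> \<tau>")
        case True then show ?thesis using hB[of s r] a by auto
      next
        case False
        then have sc: "\<tau> \<le> s" using a B(4) by force
        show ?thesis
        proof (cases "r = c")
          case True then have "s = r" using a by force
          then show ?thesis using e by simp
        next
          case False
          then have rc: "r < c" using a by auto
          have r1: "norm (f r - f \<tau>) < e / 2" using hb[of r] \<open>\<not> r \<le> \<tau>\<close> rc c by auto
          have s1: "norm (f s - f \<tau>) < e / 2"
          proof (cases "s = \<tau>")
            case True then show ?thesis using e by simp
          next
            case False then show ?thesis using hb[of s] sc a rc c by auto
          qed
          show ?thesis using r1 s1 norm_triangle_ineq4[of "f r - f \<tau>" "f s - f \<tau>"] by simp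
        qed
      qed
    qed
    then have "c \<in> S" unfolding S_def using c tau0 by auto
    then have "c \<le> \<tau>" unfolding \<tau>_def using cSup_upper Sbdd by auto
    then show False using c by auto
  qed
  obtain B where B: "finite B" "B \<subseteq> {0..T}" "0 \<in> B" "T \<in> B"
      and hB: "\<And>s r. 0 \<le> s \<Longrightarrow> s \<le> r \<Longrightarrow> r \<le> T \<Longrightarrow> (\<forall>b\<in>B. \<not> (s < b \<and> b \<le> r)) \<Longrightarrow> norm (f r - f s) < e"
    using gtau tT unfolding good_def by blast
  show ?thesis using B hB unfolding is_partition_def by blast
qed

lemma osc_left:
  assumes hB: "\<forall>s r. 0 \<le> s \<and> s \<le> r \<and> r \<le> T \<and> (\<forall>b\<in>B. \<not> (s < b \<and> b \<le> r)) \<longrightarrow> norm (f r - f s) < e"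
    and P: "is_partition 0 T P" and BP: "B \<subseteq> P" and u: "u \<in> P" "u \<noteq> 0"
  shows "norm (left_lim f u - f (prv P u)) \<le> e"
proof -
  note pr = prv_props[OF P u]
  have s0: "0 \<le> prv P u" and uT: "u \<le> T" "0 < u" using P pr u unfolding is_partition_def by auto
  show ?thesis
  proof (rule lim_bound[OF ll pr(2)])
    show "u \<in> {0<..T}" using uT by auto
    fix r assume r: "prv P u \<le> r" "r < u"
    have "\<forall>b\<in>B. \<not> (prv P u < b \<and> b \<le> r)"
    proof (intro ballI notI)
      fix b assume "b \<in> B" "prv P u < b \<and> b \<le> r"
      then show False using pr(3)[of b] BP r by force
    qed
    then show "norm (f r - f (prv P u)) \<le> e" using hB s0 r uT by (intro less_imp_le) auto
  qed
qed

lemma small_jump: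
  assumes hB: "\<forall>s r. 0 \<le> s \<and> s \<le> r \<and> r \<le> T \<and> (\<forall>b\<in>B. \<not> (s < b \<and> b \<le> r)) \<longrightarrow> norm (f r - f s) < e"
    and B: "is_partition 0 T B" and u: "u \<in> {0<..T}" "u \<notin> B"
  shows "norm (f u - left_lim f u) \<le> 2 * e"
proof -
  define P where "P = insert u B"
  have P: "is_partition 0 T P" using B u unfolding P_def is_partition_def by auto
  have uP: "u \<in> P" "u \<noteq> 0" using u unfolding P_def by auto
  have 1: "norm (left_lim f u - f (prv P u)) \<le> e"
    by (rule osc_left[OF hB P _ uP]) (auto simp: P_def)
  note pr = prv_props[OF P uP]
  have s0: "0 \<le> prv P u" using P pr unfolding is_partition_def by auto
  have "\<forall>b\<in>B. \<not> (prv P u < b \<and> b \<le> u)"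
  proof (intro ballI notI)
    fix b assume b: "b \<in> B" "prv P u < b \<and> b \<le> u"
    have "b < u" using b u by (metis le_less)
    then show False using pr(3)[of b] b by (auto simp: P_def)
  qed
  then have 2: "norm (f u - f (prv P u)) < e" using hB s0 pr(2) u by auto
  show ?thesis using 1 2 norm_triangle_ineq4[of "f u - f (prv P u)" "left_lim f u - f (prv P u)"] by simp
qed

end

lemma pow_ineq:
  fixes a e p :: real
  assumes "0 \<le> a" "0 \<le> e" "e \<le> 1" "1 \<le> p"
  shows "(a + e) powr p \<le> 2 powr p * (a powr p + e)"
proof -
  have "(a + e) powr p \<le> (2 * max a e) powr p" using assms by (intro powr_mono2) auto
  also have "\<dots> = 2 powr p * max a e powr p" using assms by (simp add: powr_mult)
  also have "max a e powr p \<le> a powr p + e"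
  proof -
    have "e powr p \<le> e powr 1" using assms by (intro powr_mono') auto
    then have "e powr p \<le> e" using assms by (cases "e = 0") auto
    moreover have "a powr p \<ge> 0" "e powr p \<ge> 0" by auto
    moreover have "max a e powr p = a powr p \<or> max a e powr p = e powr p" by (auto simp: max_def)
    ultimately show ?thesis using assms by linarith
  qed
  then have "2 powr p * max a e powr p \<le> 2 powr p * (a powr p + e)" by (intro mult_left_mono) auto
  finally show ?thesis .
qed

context cpath
begin

lemma psum_ge:
  fixes g :: "real \<Rightarrow> real \<Rightarrow> real"
  assumes P: "is_partition 0 T P" and A: "A \<subseteq> P - {0}" and g: "\<And>s u. 0 \<le> g s u"
  shows "(\<Sum>u\<in>A. g (prv P u) u) \<le> psum T P g"
proof -
  have fin: "finite (P - {0})" using P unfolding is_partition_def by auto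
  have "(\<Sum>u\<in>A. g (prv P u) u) \<le> (\<Sum>u\<in>P - {0}. g (prv P u) u)"
    by (rule sum_mono2[OF fin A, of "\<lambda>u. g (prv P u) u"]) (use g in auto)
  also have "\<dots> = psum T P g" using psum_prv[OF P T, of g] by simp
  finally show ?thesis .
qed

lemma near_left:
  assumes "\<tau> \<in> {0<..T}" "e > 0"
  shows "\<exists>d>0. \<forall>r. \<tau> - d < r \<and> r < \<tau> \<longrightarrow> norm (f r - left_lim f \<tau>) < e"
proof -
  have "\<forall>\<^sub>F r in at_left \<tau>. dist (f r) (left_lim f \<tau>) < e"
    using tendstoD[OF ll[OF assms(1)] assms(2)] .
  then obtain b where b: "b < \<tau>" "\<And>r. b < r \<Longrightarrow> r < \<tau> \<Longrightarrow> norm (f r - left_lim f \<tau>) < e"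
    unfolding eventually_at_left_field dist_norm by auto
  show ?thesis using b by (intro exI[of _ "\<tau> - b"]) auto
qed

lemma jump_bound:
  assumes A: "finite A" "A \<subseteq> {0<..T}"
  shows "(\<Sum>t\<in>A. norm (f t - left_lim f t) powr p) \<le> 2 powr p * (V + 1)"
proof -
  define \<epsilon> where "\<epsilon> = 1 / (real (card A) + 1)"
  have eps: "\<epsilon> > 0" "\<epsilon> \<le> 1" unfolding \<epsilon>_def by (auto simp: field_simps)
  have "\<forall>\<tau>\<in>A. \<exists>d>0. \<forall>r. \<tau> - d < r \<and> r < \<tau> \<longrightarrow> norm (f r - left_lim f \<tau>) < \<epsilon>"
    using near_left eps A by auto
  then obtain \<delta> where \<delta>: "\<And>\<tau>. \<tau> \<in> A \<Longrightarrow> \<delta> \<tau> > 0"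
    and h\<delta>: "\<And>\<tau> r. \<tau> \<in> A \<Longrightarrow> \<tau> - \<delta> \<tau> < r \<Longrightarrow> r < \<tau> \<Longrightarrow> norm (f r - left_lim f \<tau>) < \<epsilon>"
    by metis
  define s where "s \<tau> = \<tau> - min (\<delta> \<tau>) \<tau> / 2" for \<tau>
  have s: "\<tau> - \<delta> \<tau> < s \<tau>" "0 < s \<tau>" "s \<tau> < \<tau>" if "\<tau> \<in> A" for \<tau>
    using \<delta>[OF that] A that unfolding s_def by (auto simp: min_def)
  define P where "P = {0, T} \<union> A \<union> s ` A"
  have P: "is_partition 0 T P" unfolding P_def is_partition_def
    using A s T by (force)
  have AP: "A \<subseteq> P - {0}" using A unfolding P_def by auto
  have key: "norm (f \<tau> - left_lim f \<tau>) powr p \<le> 2 powr p * (norm (f \<tau> - f (prv P \<tau>)) powr p + \<epsilon>)"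
    if \<tau>: "\<tau> \<in> A" for \<tau>
  proof -
    have \<tau>P: "\<tau> \<in> P" "\<tau> \<noteq> 0" using AP \<tau> by auto
    note pr = prv_props[OF P \<tau>P]
    have "s \<tau> \<le> prv P \<tau>" using pr(3)[of "s \<tau>"] s[OF \<tau>] \<tau> unfolding P_def by auto
    then have "norm (f (prv P \<tau>) - left_lim f \<tau>) < \<epsilon>" using h\<delta>[OF \<tau>] s[OF \<tau>] pr(2) by auto
    then have "norm (f \<tau> - left_lim f \<tau>) \<le> norm (f \<tau> - f (prv P \<tau>)) + \<epsilon>"
      using norm_triangle_ineq[of "f \<tau> - f (prv P \<tau>)" "f (prv P \<tau>) - left_lim f \<tau>"] by simp
    then have "norm (f \<tau> - left_lim f \<tau>) powr p \<le> (norm (f \<tau> - f (prv P \<tau>)) + \<epsilon>) powr p"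
      using p by (intro powr_mono2) auto
    also have "\<dots> \<le> 2 powr p * (norm (f \<tau> - f (prv P \<tau>)) powr p + \<epsilon>)"
      using eps p by (intro pow_ineq) auto
    finally show ?thesis .
  qed
  have "(\<Sum>t\<in>A. norm (f t - left_lim f t) powr p) \<le> (\<Sum>t\<in>A. 2 powr p * (norm (f t - f (prv P t)) powr p + \<epsilon>))"
    by (rule sum_mono) (use key in auto)
  also have "\<dots> = 2 powr p * ((\<Sum>t\<in>A. norm (f t - f (prv P t)) powr p) + real (card A) * \<epsilon>)"
    by (simp add: sum_distrib_left[symmetric] sum.distrib)
  also have "\<dots> \<le> 2 powr p * (V + 1)"
  proof (rule mult_left_mono)
    have "(\<Sum>t\<in>A. norm (f t - f (prv P t)) powr p) \<le> psum T P (\<lambda>s t. norm (f t - f s) powr p)"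
      by (rule psum_ge[OF P AP]) auto
    also have "\<dots> \<le> V" by (rule Vb[OF P])
    finally have 1: "(\<Sum>t\<in>A. norm (f t - f (prv P t)) powr p) \<le> V" .
    have 2: "real (card A) * \<epsilon> \<le> 1" unfolding \<epsilon>_def by (auto simp: field_simps)
    show "(\<Sum>t\<in>A. norm (f t - f (prv P t)) powr p) + real (card A) * \<epsilon> \<le> V + 1" using 1 2 by simp
  qed auto
  finally show ?thesis .
qed

end

lemma powr_split_bound:
  fixes d c p q :: real
  assumes "0 \<le> d" "d \<le> c" "p \<le> q"
  shows "d powr q \<le> c powr (q - p) * d powr p"
proof -
  have "d powr q = d powr (q - p) * d powr p" by (simp add: powr_add[symmetric])
  also have "\<dots> \<le> c powr (q - p) * d powr p"
    using assms by (intro mult_right_mono powr_mono2) auto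
  finally show ?thesis .
qed

context cpath
begin

definition J1 where "J1 t = norm (f t - left_lim f t)"

lemma big_jumps:
  assumes th: "\<theta> > 0"
  obtains B where "is_partition 0 T B"
    "\<forall>s r. 0 \<le> s \<and> s \<le> r \<and> r \<le> T \<and> (\<forall>b\<in>B. \<not> (s < b \<and> b \<le> r)) \<longrightarrow> norm (f r - f s) < \<theta> / 2"
    "{t \<in> {0<..T}. J1 t > \<theta>} \<subseteq> B" "finite {t \<in> {0<..T}. J1 t > \<theta>}"
proof -
  obtain B where B: "is_partition 0 T B"
    and hB: "\<forall>s r. 0 \<le> s \<and> s \<le> r \<and> r \<le> T \<and> (\<forall>b\<in>B. \<not> (s < b \<and> b \<le> r)) \<longrightarrow> norm (f r - f s) < \<theta> / 2"
    using billingsley[of "\<theta> / 2"] th by auto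
  have sub: "{t \<in> {0<..T}. J1 t > \<theta>} \<subseteq> B"
  proof
    fix t assume t: "t \<in> {t \<in> {0<..T}. J1 t > \<theta>}"
    show "t \<in> B"
    proof (rule ccontr)
      assume "t \<notin> B"
      then have "J1 t \<le> 2 * (\<theta> / 2)" unfolding J1_def using small_jump[OF hB B] t by auto
      then show False using t by auto
    qed
  qed
  moreover have "finite B" using B unfolding is_partition_def by auto
  ultimately show ?thesis using that B hB finite_subset by blast
qed

lemma jump_bound': "finite A \<Longrightarrow> A \<subseteq> {0<..T} \<Longrightarrow> (\<Sum>t\<in>A. J1 t powr p) \<le> 2 powr p * (V + 1)"
  unfolding J1_def by (rule jump_bound)

end

locale cpathR = cpath f T p V
  for f :: "real \<Rightarrow> 'v::real_normed_vector" and T p V :: real +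
  fixes R :: "'v \<Rightarrow> 'v \<Rightarrow> 'u::banach" and q CR :: real
  assumes q: "q > p" and CR: "CR \<ge> 0" and Rb: "\<And>x y. norm (R x y) \<le> CR * norm (y - x) powr q"
    and Rc: "\<And>y a. isCont (\<lambda>b. R b y) a"
begin

definition J where "J t = R (left_lim f t) (f t)"
definition W where "W = 2 powr p * (V + 1)"

lemma W0: "W \<ge> 0" unfolding W_def using V0 by auto

lemma J_small: "J1 t \<le> c \<Longrightarrow> norm (J t) \<le> CR * c powr (q - p) * J1 t powr p"
proof -
  assume c: "J1 t \<le> c"
  have "norm (J t) \<le> CR * J1 t powr q" unfolding J_def J1_def using Rb by simp
  also have "\<dots> \<le> CR * (c powr (q - p) * J1 t powr p)"
    using c q CR by (intro mult_left_mono powr_split_bound) (auto simp: J1_def)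
  finally show ?thesis by (simp add: mult.assoc)
qed

lemma tail_sums:
  assumes th: "\<theta> > 0" and F: "finite F" "F \<subseteq> {0<..T} - {t \<in> {0<..T}. J1 t > \<theta>}"
  shows "(\<Sum>t\<in>F. norm (J t)) \<le> CR * \<theta> powr (q - p) * W"
proof -
  have "(\<Sum>t\<in>F. norm (J t)) \<le> (\<Sum>t\<in>F. CR * \<theta> powr (q - p) * J1 t powr p)"
    by (rule sum_mono, rule J_small) (use F in force)
  also have "\<dots> = CR * \<theta> powr (q - p) * (\<Sum>t\<in>F. J1 t powr p)" by (simp add: sum_distrib_left)
  also have "\<dots> \<le> CR * \<theta> powr (q - p) * W" unfolding W_def
    using CR F by (intro mult_left_mono jump_bound') auto
  finally show ?thesis .
qed

lemma J_abs_summable: "J abs_summable_on {0<..T}"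
proof -
  obtain B where G1: "finite {t \<in> {0<..T}. J1 t > 1}" using big_jumps[of 1] by auto
  define G where "G = {t \<in> {0<..T}. J1 t > 1}"
  have "sum (\<lambda>t. norm (J t)) F \<le> (\<Sum>t\<in>G. norm (J t)) + CR * 1 powr (q - p) * W"
    if F: "F \<subseteq> {0<..T}" "finite F" for F
  proof -
    have "sum (\<lambda>t. norm (J t)) F = sum (\<lambda>t. norm (J t)) (F \<inter> G) + sum (\<lambda>t. norm (J t)) (F - G)"
      using F by (metis sum.Int_Diff)
    also have "sum (\<lambda>t. norm (J t)) (F \<inter> G) \<le> (\<Sum>t\<in>G. norm (J t))"
      using G1 unfolding G_def by (intro sum_mono2) auto
    also have "sum (\<lambda>t. norm (J t)) (F - G) \<le> CR * 1 powr (q - p) * W"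
      by (rule tail_sums) (use F in \<open>auto simp: G_def\<close>)
    finally show ?thesis by simp
  qed
  then show ?thesis
    by (intro nonneg_bdd_above_summable_on bdd_aboveI2) auto
qed

lemma tail_bound:
  assumes th: "\<theta> > 0"
  shows "norm (infsum J ({0<..T} - {t \<in> {0<..T}. J1 t > \<theta>})) \<le> CR * \<theta> powr (q - p) * W"
proof -
  let ?S = "{0<..T} - {t \<in> {0<..T}. J1 t > \<theta>}"
  have as: "J abs_summable_on ?S"
    by (rule summable_on_subset_banach[OF J_abs_summable]) auto
  have "norm (infsum J ?S) \<le> infsum (\<lambda>t. norm (J t)) ?S" by (rule norm_infsum_bound[OF as])
  also have "\<dots> \<le> CR * \<theta> powr (q - p) * W"
    by (rule infsum_le_finite_sums[OF as]) (rule tail_sums[OF th])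
  finally show ?thesis .
qed

end

context cpathR
begin

lemma near_jump:
  assumes "\<tau> \<in> {0<..T}" "e > 0"
  shows "\<exists>d>0. \<forall>r. \<tau> - d < r \<and> r < \<tau> \<longrightarrow> norm (R (f r) (f \<tau>) - J \<tau>) < e"
proof -
  have "((\<lambda>r. R (f r) (f \<tau>)) \<longlongrightarrow> J \<tau>) (at_left \<tau>)"
    unfolding J_def by (rule isCont_tendsto_compose[OF Rc ll[OF assms(1)]])
  from tendstoD[OF this assms(2)] obtain b where b: "b < \<tau>"
    "\<And>r. b < r \<Longrightarrow> r < \<tau> \<Longrightarrow> norm (R (f r) (f \<tau>) - J \<tau>) < e"
    unfolding eventually_at_left_field dist_norm by auto
  show ?thesis using b by (intro exI[of _ "\<tau> - b"]) auto
qed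

lemma main_rrs: "rrs_converges 0 T (\<lambda>P. psum T P (\<lambda>s t. R (f s) (f t))) (infsum J {0<..T})"
  unfolding rrs_converges_def
proof (intro allI impI)
  fix \<epsilon> :: real assume eps: "\<epsilon> > 0"
  define K where "K = CR * (V + W)"
  have K0: "K \<ge> 0" unfolding K_def using CR V0 W0 by auto
  define \<kappa> where "\<kappa> = \<epsilon> / (2 * (K + 1))"
  have kap: "\<kappa> > 0" unfolding \<kappa>_def using eps K0 by auto
  define \<theta> where "\<theta> = \<kappa> powr (1 / (q - p)) / 2"
  have th: "\<theta> > 0" unfolding \<theta>_def using kap by auto
  have th2: "(2 * \<theta>) powr (q - p) \<le> \<kappa>"
  proof -
    have "(2 * \<theta>) powr (q - p) = (\<kappa> powr (1 / (q - p))) powr (q - p)" unfolding \<theta>_def by simp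
    also have "\<dots> = \<kappa>" using q kap by (simp add: powr_powr)
    finally show ?thesis by simp
  qed
  have th1: "\<theta> powr (q - p) \<le> (2 * \<theta>) powr (q - p)" using th q by (intro powr_mono2) auto
  have Kk: "K * \<kappa> < \<epsilon> / 2"
  proof -
    have "K * \<kappa> = (\<epsilon> / 2) * (K / (K + 1))" unfolding \<kappa>_def by (simp add: field_simps)
    also have "\<dots> < (\<epsilon> / 2) * 1" using eps K0 by (intro mult_strict_left_mono) auto
    finally show ?thesis by simp
  qed
  obtain B where B: "is_partition 0 T B"
    and hB: "\<forall>s r. 0 \<le> s \<and> s \<le> r \<and> r \<le> T \<and> (\<forall>b\<in>B. \<not> (s < b \<and> b \<le> r)) \<longrightarrow> norm (f r - f s) < \<theta> / 2"
    and AB: "{t \<in> {0<..T}. J1 t > \<theta>} \<subseteq> B" and Afin: "finite {t \<in> {0<..T}. J1 t > \<theta>}"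
    using big_jumps[OF th] by blast
  define A where "A = {t \<in> {0<..T}. J1 t > \<theta>}"
  define e1 where "e1 = \<epsilon> / (2 * (real (card A) + 1))"
  have e1: "e1 > 0" unfolding e1_def using eps by auto
  have "\<forall>\<tau>\<in>A. \<exists>d>0. \<forall>r. \<tau> - d < r \<and> r < \<tau> \<longrightarrow> norm (R (f r) (f \<tau>) - J \<tau>) < e1"
    using near_jump e1 unfolding A_def by auto
  then obtain \<delta> where \<delta>: "\<And>\<tau>. \<tau> \<in> A \<Longrightarrow> \<delta> \<tau> > 0"
    and h\<delta>: "\<And>\<tau> r. \<tau> \<in> A \<Longrightarrow> \<tau> - \<delta> \<tau> < r \<Longrightarrow> r < \<tau> \<Longrightarrow> norm (R (f r) (f \<tau>) - J \<tau>) < e1"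
    by metis
  define s where "s \<tau> = \<tau> - min (\<delta> \<tau>) \<tau> / 2" for \<tau>
  have s: "\<tau> - \<delta> \<tau> < s \<tau>" "0 < s \<tau>" "s \<tau> < \<tau>" if "\<tau> \<in> A" for \<tau>
    using \<delta>[OF that] that unfolding s_def A_def by (auto simp: min_def)
  define Pe where "Pe = B \<union> s ` A"
  have Pe: "is_partition 0 T Pe" using B s Afin unfolding Pe_def is_partition_def A_def by force
  show "\<exists>Pe. is_partition 0 T Pe \<and> (\<forall>P. is_partition 0 T P \<and> Pe \<subseteq> P \<longrightarrow>
      norm (psum T P (\<lambda>s t. R (f s) (f t)) - infsum J {0<..T}) < \<epsilon>)"
  proof (intro exI[of _ Pe] conjI allI impI Pe)
    fix P assume "is_partition 0 T P \<and> Pe \<subseteq> P"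
    then have P: "is_partition 0 T P" and PeP: "Pe \<subseteq> P" by auto
    have finP: "finite P" using P unfolding is_partition_def by auto
    have AP: "A \<subseteq> P - {0}" using AB PeP unfolding A_def Pe_def by auto
    define g where "g u = R (f (prv P u)) (f u)" for u
    define Rest where "Rest = (P - {0}) - A"
    have ps: "psum T P (\<lambda>s t. R (f s) (f t)) = (\<Sum>u\<in>A. g u) + (\<Sum>u\<in>Rest. g u)"
      unfolding psum_prv[OF P T] g_def Rest_def
      using sum.subset_diff[OF AP] finP by (simp add: add.commute)
    have sumA: "J summable_on A" using Afin unfolding A_def by simp
    have sumT: "J summable_on ({0<..T} - A)"
      by (rule abs_summable_summable, rule summable_on_subset_banach[OF J_abs_summable]) auto
    have isum: "infsum J {0<..T} = (\<Sum>u\<in>A. J u) + infsum J ({0<..T} - A)"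
    proof -
      have "{0<..T} = A \<union> ({0<..T} - A)" unfolding A_def by auto
      then have "infsum J {0<..T} = infsum J (A \<union> ({0<..T} - A))" by simp
      also have "\<dots> = infsum J A + infsum J ({0<..T} - A)"
        by (rule infsum_Un_disjoint[OF sumA sumT]) auto
      finally show ?thesis using Afin unfolding A_def by simp
    qed
    have diff: "psum T P (\<lambda>s t. R (f s) (f t)) - infsum J {0<..T}
        = (\<Sum>u\<in>A. g u - J u) + (\<Sum>u\<in>Rest. g u) - infsum J ({0<..T} - A)"
      unfolding ps isum by (simp add: sum_subtractf algebra_simps)
    have t1: "norm (\<Sum>u\<in>A. g u - J u) \<le> real (card A) * e1"
    proof -
      have "norm (g u - J u) \<le> e1" if u: "u \<in> A" for u
      proof -
        have uP: "u \<in> P" "u \<noteq> 0" using AP u by auto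
        note pr = prv_props[OF P uP]
        have "s u \<in> P" using PeP u unfolding Pe_def by auto
        then have "s u \<le> prv P u" using pr(3) s[OF u] by auto
        then show ?thesis unfolding g_def using h\<delta>[OF u, of "prv P u"] s[OF u] pr(2) by auto
      qed
      then have "norm (\<Sum>u\<in>A. g u - J u) \<le> (\<Sum>u\<in>A. e1)" by (intro sum_norm_le) auto
      then show ?thesis by simp
    qed
    have t1': "real (card A) * e1 < \<epsilon> / 2"
    proof -
      have "real (card A) * e1 = (\<epsilon> / 2) * (real (card A) / (real (card A) + 1))"
        unfolding e1_def by (simp add: field_simps)
      also have "\<dots> < (\<epsilon> / 2) * 1" using eps by (intro mult_strict_left_mono) auto
      finally show ?thesis by simp
    qed
    have t2: "norm (\<Sum>u\<in>Rest. g u) \<le> CR * (2 * \<theta>) powr (q - p) * V"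
    proof -
      have "norm (g u) \<le> CR * (2 * \<theta>) powr (q - p) * norm (f u - f (prv P u)) powr p"
        if u: "u \<in> Rest" for u
      proof -
        have uP: "u \<in> P" "u \<noteq> 0" "u \<notin> A" using u unfolding Rest_def by auto
        have uT: "u \<in> {0<..T}" using P uP unfolding is_partition_def by force
        have j: "J1 u \<le> \<theta>" using uP uT unfolding A_def by auto
        have o: "norm (left_lim f u - f (prv P u)) \<le> \<theta> / 2"
          by (rule osc_left[OF hB P _ uP(1,2)]) (use PeP in \<open>auto simp: Pe_def\<close>)
        have "norm (f u - f (prv P u)) \<le> J1 u + norm (left_lim f u - f (prv P u))"
          unfolding J1_def using norm_triangle_ineq[of "f u - left_lim f u" "left_lim f u - f (prv P u)"] by simp
        then have d: "norm (f u - f (prv P u)) \<le> 2 * \<theta>" using j o th by auto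
        have "norm (g u) \<le> CR * norm (f u - f (prv P u)) powr q" unfolding g_def using Rb by simp
        also have "\<dots> \<le> CR * ((2 * \<theta>) powr (q - p) * norm (f u - f (prv P u)) powr p)"
          using d q CR by (intro mult_left_mono powr_split_bound) auto
        finally show ?thesis by (simp add: mult.assoc)
      qed
      then have "norm (\<Sum>u\<in>Rest. g u) \<le> (\<Sum>u\<in>Rest. CR * (2 * \<theta>) powr (q - p) * norm (f u - f (prv P u)) powr p)"
        by (intro sum_norm_le) auto
      also have "\<dots> = CR * (2 * \<theta>) powr (q - p) * (\<Sum>u\<in>Rest. norm (f u - f (prv P u)) powr p)"
        by (simp add: sum_distrib_left)
      also have "\<dots> \<le> CR * (2 * \<theta>) powr (q - p) * V"
      proof (intro mult_left_mono)
        have "(\<Sum>u\<in>Rest. norm (f u - f (prv P u)) powr p) \<le> psum T P (\<lambda>s t. norm (f t - f s) powr p)"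
          by (rule psum_ge[OF P]) (auto simp: Rest_def)
        also have "\<dots> \<le> V" by (rule Vb[OF P])
        finally show "(\<Sum>u\<in>Rest. norm (f u - f (prv P u)) powr p) \<le> V" .
      qed (use CR in auto)
      finally show ?thesis .
    qed
    have t3: "norm (infsum J ({0<..T} - A)) \<le> CR * (2 * \<theta>) powr (q - p) * W"
    proof -
      have "norm (infsum J ({0<..T} - A)) \<le> CR * \<theta> powr (q - p) * W"
        using tail_bound[OF th] unfolding A_def by simp
      also have "\<dots> \<le> CR * (2 * \<theta>) powr (q - p) * W"
        using th1 CR W0 by (intro mult_right_mono mult_left_mono) auto
      finally show ?thesis .
    qed
    have t23: "CR * (2 * \<theta>) powr (q - p) * V + CR * (2 * \<theta>) powr (q - p) * W \<le> K * \<kappa>"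
    proof -
      have "CR * (2 * \<theta>) powr (q - p) * V + CR * (2 * \<theta>) powr (q - p) * W = (2 * \<theta>) powr (q - p) * K"
        unfolding K_def by (simp add: algebra_simps)
      also have "\<dots> \<le> \<kappa> * K" using th2 K0 by (intro mult_right_mono) auto
      finally show ?thesis by (simp add: mult.commute)
    qed
    have "norm (psum T P (\<lambda>s t. R (f s) (f t)) - infsum J {0<..T})
        \<le> norm (\<Sum>u\<in>A. g u - J u) + norm (\<Sum>u\<in>Rest. g u) + norm (infsum J ({0<..T} - A))"
      unfolding diff by (rule order_trans[OF norm_triangle_ineq4]) (simp add: norm_triangle_ineq)
    then show "norm (psum T P (\<lambda>s t. R (f s) (f t)) - infsum J {0<..T}) < \<epsilon>"
      using t1 t1' t2 t3 t23 Kk by linarith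
  qed
qed

end

lemma taylor_psum:
  fixes F :: "'v::real_normed_vector \<Rightarrow> 'u::real_normed_vector"
  assumes P: "is_partition 0 T P" and T: "0 < T"
  shows "psum T P (\<lambda>s t. taylor_incr n F (f s) (f t - f s)) =
     (F (f T) - F (f 0)) - psum T P (\<lambda>s t. remT n F (f s) (f t))"
proof -
  have "psum T P (\<lambda>s t. taylor_incr n F (f s) (f t - f s)) =
      psum T P (\<lambda>s t. F (f t) - F (f s)) - psum T P (\<lambda>s t. remT n F (f s) (f t))"
    unfolding psum_def remT_def by (simp add: sum_subtractf[symmetric])
  also have "psum T P (\<lambda>s t. F (f t) - F (f s)) = F (f T) - F (f 0)"
    by (rule psum_telescope[OF P T])
  finally show ?thesis .
qed

theorem proposition4p1:
  fixes M :: "'a measure" and X :: "real \<Rightarrow> 'a \<Rightarrow> 'v::banach"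
    and F :: "'v \<Rightarrow> 'u::banach" and T p :: real
  assumes "prob_space M"
    and "T > 0"
    and "p \<ge> 1"
    and "\<forall>t\<in>{0..T}. (\<lambda>\<omega>. X t \<omega>) \<in> borel_measurable M"
    and "\<forall>\<omega>\<in>space M. cadlag_on 0 T (\<lambda>t. X t \<omega>)"
    and "AE \<omega> in M. finite_p_var p 0 T (\<lambda>t. X t \<omega>)"
    and "Cb (nat \<lfloor>p\<rfloor> + 1) F"
  shows "AE \<omega> in M. \<exists>K.
     rrs_converges 0 T
       (\<lambda>P. psum T P (\<lambda>s t. taylor_incr (nat \<lfloor>p\<rfloor>) F (X s \<omega>) (X t \<omega> - X s \<omega>))) K
   \<and> (\<lambda>t. F (X t \<omega>) - F (left_lim (\<lambda>u. X u \<omega>) t)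
          - taylor_incr (nat \<lfloor>p\<rfloor>) F (left_lim (\<lambda>u. X u \<omega>) t)
                (X t \<omega> - left_lim (\<lambda>u. X u \<omega>) t)) abs_summable_on {0<..T}
   \<and> F (X T \<omega>) - F (X 0 \<omega>) = K +
       (\<Sum>\<^sub>\<infinity>t\<in>{0<..T}. F (X t \<omega>) - F (left_lim (\<lambda>u. X u \<omega>) t)
          - taylor_incr (nat \<lfloor>p\<rfloor>) F (left_lim (\<lambda>u. X u \<omega>) t)
                (X t \<omega> - left_lim (\<lambda>u. X u \<omega>) t))"
proof -
  define n where "n = nat \<lfloor>p\<rfloor>"
  have CbF: "Cb (Suc n) F" using assms(7) unfolding n_def by simp
  obtain CR where CR: "CR \<ge> 0" and CRb: "\<And>x y. norm (remT n F x y) \<le> CR * norm (y - x) ^ Suc n"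
    using Cb_props(1)[OF CbF] by blast
  have Rc: "\<And>y a. isCont (\<lambda>b. remT n F b y) a" using Cb_props(2)[OF CbF] .
  have qp: "real (Suc n) > p" unfolding n_def using assms(3) by linarith
  have Rb: "norm (remT n F x y) \<le> CR * norm (y - x) powr real (Suc n)" for x y
  proof (cases "y - x = 0")
    case True then show ?thesis using CRb[of x y] by simp
  next
    case False
    then have "norm (y - x) > 0" by simp
    then have "norm (y - x) powr real (Suc n) = norm (y - x) ^ Suc n" by (rule powr_realpow)
    then show ?thesis using CRb[of x y] by simp
  qed
  show ?thesis
    using assms(6) AE_space
  proof eventually_elim
    case (elim \<omega>)
    define f where "f t = X t \<omega>" for t
    have cad: "cadlag_on 0 T f" using assms(5) elim unfolding f_def by auto
    obtain V where V: "\<And>P. is_partition 0 T P \<Longrightarrow> psum T P (\<lambda>s t. norm (f t - f s) powr p) \<le> V"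
      using elim(1) unfolding finite_p_var_def bdd_above_def f_def by blast
    interpret cpathR f T p V "remT n F" "real (Suc n)" CR
      by unfold_locales (use assms(2,3) cad V qp CR Rb Rc in auto)
    define K where "K = F (f T) - F (f 0) - infsum J {0<..T}"
    have Jeq: "F (X t \<omega>) - F (left_lim (\<lambda>u. X u \<omega>) t)
          - taylor_incr n F (left_lim (\<lambda>u. X u \<omega>) t) (X t \<omega> - left_lim (\<lambda>u. X u \<omega>) t) = J t" for t
      unfolding f_def[symmetric] by (simp add: J_def remT_def)
    have rrs: "rrs_converges 0 T (\<lambda>P. psum T P (\<lambda>s t. taylor_incr n F (f s) (f t - f s))) K"
      unfolding rrs_converges_def
    proof (intro allI impI)
      fix e :: real assume e: "e > 0"
      obtain Pe where Pe: "is_partition 0 T Pe"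
        and h: "\<And>P. is_partition 0 T P \<Longrightarrow> Pe \<subseteq> P \<Longrightarrow>
          norm (psum T P (\<lambda>s t. remT n F (f s) (f t)) - infsum J {0<..T}) < e"
        using main_rrs e unfolding rrs_converges_def by meson
      show "\<exists>Pe. is_partition 0 T Pe \<and> (\<forall>P. is_partition 0 T P \<and> Pe \<subseteq> P \<longrightarrow>
          norm (psum T P (\<lambda>s t. taylor_incr n F (f s) (f t - f s)) - K) < e)"
      proof (intro exI[of _ Pe] conjI allI impI Pe)
        fix P assume PP: "is_partition 0 T P \<and> Pe \<subseteq> P"
        have "psum T P (\<lambda>s t. taylor_incr n F (f s) (f t - f s)) - K
            = - (psum T P (\<lambda>s t. remT n F (f s) (f t)) - infsum J {0<..T})"
          using taylor_psum[of T P n F f] PP assms(2) unfolding K_def by simp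
        then show "norm (psum T P (\<lambda>s t. taylor_incr n F (f s) (f t - f s)) - K) < e"
          using h PP by (simp only: norm_minus_cancel)
      qed
    qed
    show ?case
      unfolding n_def[symmetric] Jeq
    proof (intro exI[of _ K] conjI)
      show "rrs_converges 0 T (\<lambda>P. psum T P (\<lambda>s t. taylor_incr n F (X s \<omega>) (X t \<omega> - X s \<omega>))) K"
        using rrs unfolding f_def .
      show "(\<lambda>t. J t) abs_summable_on {0<..T}" by (rule J_abs_summable)
      show "F (X T \<omega>) - F (X 0 \<omega>) = K + (\<Sum>\<^sub>\<infinity>t\<in>{0<..T}. J t)"
        unfolding K_def f_def by simp
    qed
  qed
qed

end
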